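(* Let $G=(V,E)$ be a graph, let $\mathcal{M}$ be a nontrivial, unbounded graph matroid family with dimensionality $d$, and let $k\ge2$ be an integer. If $\mathcal{M}(G)$ is vertically $k$-connected, then the minimum degree of $G$ is at least $k+d-1$. In particular, $|V|\ge k+d$.
   Context: All graphs are finite and simple and have no isolated vertices. A graph matroid family $\mathcal{M}$ assigns to every graph $G$ a matroid $\mathcal{M}(G)$ on $E(G)$ such that (i) every graph isomorphism $V(G)\to V(H)$ induces an isomorphism $\mathcal{M}(G)\to\mathcal{M}(H)$, and (ii) for every subgraph $H$ of $G$, $\mathcal{M}(H)$ is the restriction of $\mathcal{M}(G)$ to $E(H)$. $r(G)$ is the rank of $\mathcal{M}(G)$. $\mathcal{M}$ is nontrivial if some graph $G$ has $r(G)<|E(G)|$, unbounded if $r(K_n)$ is unbounded. An $\mathcal{M}$-circuit is a graph $C$ with $r(C)<|E(C)|$ and $r(C-e)=|E(C)|-1$ for all edges $e$; the dimensionality $d$ is the minimum over $\mathcal{M}$-circuits of (minimum degree $-1$). For a matroid with rank function $r$ on ground set $E$ and positive integer $k$, a bipartition $(E_1,E_2)$ of $E$ is a vertical $k$-separation if $r(E_1),r(E_2)\ge k$ and $r(E_1)+r(E_2)\le r(E)+k-1$; the matroid is vertically $k$-connected if its rank is at least $k$ and it has no vertical $k'$-separation for any positive integer $k'<k$. *)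

theory Defs
  imports Main
begin

text \<open>Graphs: finite simple graphs without isolated vertices, vertices drawn from nat,
  represented by their edge set (each edge a 2-element vertex set); V(G) is the union of edges.\<close>

definition is_graph :: "nat set set \<Rightarrow> bool" where
  "is_graph G \<longleftrightarrow> finite G \<and> (\<forall>e\<in>G. card e = 2)"

definition verts :: "nat set set \<Rightarrow> nat set" where
  "verts G = \<Union>G"

definition degree :: "nat set set \<Rightarrow> nat \<Rightarrow> nat" where
  "degree G v = card {e\<in>G. v \<in> e}"

definition min_degree :: "nat set set \<Rightarrow> nat" where
  "min_degree G = Min (degree G ` verts G)"

definition complete_graph :: "nat \<Rightarrow> nat set set" where
  "complete_graph n = {{i, j} | i j. i < n \<and> j < n \<and> i \<noteq> j}"

definition matroid :: "'a set \<Rightarrow> ('a set \<Rightarrow> bool) \<Rightarrow> bool" where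
  "matroid E indep \<longleftrightarrow> finite E \<and> (\<forall>F. indep F \<longrightarrow> F \<subseteq> E) \<and> indep {} \<and>
     (\<forall>F F'. indep F \<and> F' \<subseteq> F \<longrightarrow> indep F') \<and>
     (\<forall>F F'. indep F \<and> indep F' \<and> card F < card F' \<longrightarrow> (\<exists>x\<in>F' - F. indep (insert x F)))"

definition mrank :: "('a set \<Rightarrow> bool) \<Rightarrow> 'a set \<Rightarrow> nat" where
  "mrank indep A = Max (card ` {F. F \<subseteq> A \<and> indep F})"

definition vertical_separation :: "'a set \<Rightarrow> ('a set \<Rightarrow> bool) \<Rightarrow> nat \<Rightarrow> 'a set \<Rightarrow> 'a set \<Rightarrow> bool" where
  "vertical_separation E indep k E1 E2 \<longleftrightarrow>
     E1 \<union> E2 = E \<and> E1 \<inter> E2 = {} \<and>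
     mrank indep E1 \<ge> k \<and> mrank indep E2 \<ge> k \<and>
     mrank indep E1 + mrank indep E2 \<le> mrank indep E + k - 1"

definition vertically_connected :: "'a set \<Rightarrow> ('a set \<Rightarrow> bool) \<Rightarrow> nat \<Rightarrow> bool" where
  "vertically_connected E indep k \<longleftrightarrow> mrank indep E \<ge> k \<and>
     (\<forall>k' E1 E2. 0 < k' \<and> k' < k \<longrightarrow> \<not> vertical_separation E indep k' E1 E2)"

text \<open>Graph matroid families: M G is the independence predicate of the matroid M(G) on E(G).\<close>

definition graph_matroid_family :: "(nat set set \<Rightarrow> nat set set \<Rightarrow> bool) \<Rightarrow> bool" where
  "graph_matroid_family M \<longleftrightarrow>
     (\<forall>G. is_graph G \<longrightarrow> matroid G (M G)) \<and>
     (\<forall>G H f. is_graph G \<and> is_graph H \<and> bij_betw f (verts G) (verts H) \<and>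
        H = (\<lambda>e. f ` e) ` G \<longrightarrow>
        (\<forall>F. F \<subseteq> G \<longrightarrow> (M G F \<longleftrightarrow> M H ((\<lambda>e. f ` e) ` F)))) \<and>
     (\<forall>G H. is_graph G \<and> H \<subseteq> G \<longrightarrow> (\<forall>F. M H F \<longleftrightarrow> M G F \<and> F \<subseteq> H))"

definition grank :: "(nat set set \<Rightarrow> nat set set \<Rightarrow> bool) \<Rightarrow> nat set set \<Rightarrow> nat" where
  "grank M G = mrank (M G) G"

definition nontrivial_family :: "(nat set set \<Rightarrow> nat set set \<Rightarrow> bool) \<Rightarrow> bool" where
  "nontrivial_family M \<longleftrightarrow> (\<exists>G. is_graph G \<and> grank M G < card G)"

definition unbounded_family :: "(nat set set \<Rightarrow> nat set set \<Rightarrow> bool) \<Rightarrow> bool" where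
  "unbounded_family M \<longleftrightarrow> (\<forall>m. \<exists>n. grank M (complete_graph n) \<ge> m)"

definition is_circuit :: "(nat set set \<Rightarrow> nat set set \<Rightarrow> bool) \<Rightarrow> nat set set \<Rightarrow> bool" where
  "is_circuit M C \<longleftrightarrow> is_graph C \<and> grank M C < card C \<and>
     (\<forall>e\<in>C. grank M (C - {e}) = card C - 1)"

definition dimensionality :: "(nat set set \<Rightarrow> nat set set \<Rightarrow> bool) \<Rightarrow> nat" where
  "dimensionality M = (LEAST d. \<exists>C. is_circuit M C \<and> d = min_degree C - 1)"

end

theory Submission
  imports Defs
begin


lemma m_fin: "matroid E indep \<Longrightarrow> finite E" by (simp add: matroid_def)
lemma m_sub: "matroid E indep \<Longrightarrow> indep F \<Longrightarrow> F \<subseteq> E" by (simp add: matroid_def)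
lemma m_empty: "matroid E indep \<Longrightarrow> indep {}" by (simp add: matroid_def)
lemma m_down: "matroid E indep \<Longrightarrow> indep F \<Longrightarrow> F' \<subseteq> F \<Longrightarrow> indep F'"
  unfolding matroid_def by blast
lemma m_aug: "matroid E indep \<Longrightarrow> indep F \<Longrightarrow> indep F' \<Longrightarrow> card F < card F' \<Longrightarrow> \<exists>x\<in>F' - F. indep (insert x F)"
  unfolding matroid_def by blast
lemma m_finF: "matroid E indep \<Longrightarrow> indep F \<Longrightarrow> finite F"
  using m_fin m_sub finite_subset by metis

lemma rk_fin: assumes "matroid E indep" shows "finite (card ` {F. F \<subseteq> A \<and> indep F})"
proof -
  have "{F. F \<subseteq> A \<and> indep F} \<subseteq> Pow E" using m_sub[OF assms] by blast
  then show ?thesis using m_fin[OF assms] by (meson finite_Pow_iff finite_imageI finite_subset)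
qed

lemma rk_ge: assumes "matroid E indep" "F \<subseteq> A" "indep F" shows "card F \<le> mrank indep A"
  unfolding mrank_def using rk_fin[OF assms(1)] assms by (intro Max_ge) auto

lemma rk_ex: assumes "matroid E indep" shows "\<exists>F. F \<subseteq> A \<and> indep F \<and> card F = mrank indep A"
proof -
  have "{F. F \<subseteq> A \<and> indep F} \<noteq> {}" using m_empty[OF assms] by blast
  then have "mrank indep A \<in> card ` {F. F \<subseteq> A \<and> indep F}"
    unfolding mrank_def using rk_fin[OF assms] by (intro Max_in) auto
  then show ?thesis by auto
qed

lemma rk_le_card: assumes "matroid E indep" "finite A" shows "mrank indep A \<le> card A"
  using rk_ex[OF assms(1), of A] assms(2) by (metis card_mono)

lemma rk_mono: assumes "matroid E indep" "A \<subseteq> B" shows "mrank indep A \<le> mrank indep B"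
  using rk_ex[OF assms(1), of A] rk_ge[OF assms(1)] assms(2) by (metis order_trans)

lemma indep_rk: assumes "matroid E indep" "indep A" shows "mrank indep A = card A"
  using rk_ge[OF assms(1) order_refl assms(2)] rk_le_card[OF assms(1) m_finF[OF assms]] by linarith

lemma rk_indep: assumes "matroid E indep" "finite A" "mrank indep A = card A" shows "indep A"
proof -
  obtain F where F: "F \<subseteq> A" "indep F" "card F = mrank indep A" using rk_ex[OF assms(1)] by blast
  then have "F = A" using assms(2,3) card_subset_eq by metis
  then show ?thesis using F by simp
qed

lemma rk_extend: assumes "matroid E indep"
  shows "indep I \<Longrightarrow> I \<subseteq> A \<Longrightarrow> \<exists>J. I \<subseteq> J \<and> J \<subseteq> A \<and> indep J \<and> card J = mrank indep A"
proof (induction "mrank indep A - card I" arbitrary: I rule: less_induct)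
  case less
  obtain F where F: "F \<subseteq> A" "indep F" "card F = mrank indep A" using rk_ex[OF assms] by blast
  show ?case
  proof (cases "card I < card F")
    case True
    then obtain x where x: "x \<in> F - I" "indep (insert x I)" using m_aug[OF assms less(2) F(2)] by blast
    have fI: "finite I" using m_finF[OF assms less(2)] .
    have c: "card (insert x I) = card I + 1" using x fI by simp
    have "mrank indep A - card (insert x I) < mrank indep A - card I" using c True F by simp
    moreover have "insert x I \<subseteq> A" using x F less(3) by blast
    ultimately obtain J where "insert x I \<subseteq> J" "J \<subseteq> A" "indep J" "card J = mrank indep A"
      using less(1)[OF _ x(2)] by blast
    then show ?thesis by (intro exI[of _ J]) auto
  next
    case False
    then have "card I = mrank indep A" using rk_ge[OF assms less(3) less(2)] F by simp
    then show ?thesis using less by blast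
  qed
qed

lemma rk_submod: assumes "matroid E indep"
  shows "mrank indep (A \<union> B) + mrank indep (A \<inter> B) \<le> mrank indep A + mrank indep B"
proof -
  obtain I where I: "I \<subseteq> A \<inter> B" "indep I" "card I = mrank indep (A \<inter> B)" using rk_ex[OF assms] by blast
  obtain J where J: "I \<subseteq> J" "J \<subseteq> A \<union> B" "indep J" "card J = mrank indep (A \<union> B)"
    using rk_extend[OF assms I(2), of "A \<union> B"] I(1) by auto
  have fJ: "finite J" using m_finF[OF assms J(3)] .
  have a: "card (J \<inter> A) \<le> mrank indep A" using rk_ge[OF assms _ m_down[OF assms J(3)], of "J \<inter> A" A] by simp
  have b: "card (J \<inter> B) \<le> mrank indep B" using rk_ge[OF assms _ m_down[OF assms J(3)], of "J \<inter> B" B] by simp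
  have "card (J \<inter> A) + card (J \<inter> B) = card ((J \<inter> A) \<union> (J \<inter> B)) + card ((J \<inter> A) \<inter> (J \<inter> B))"
    using fJ by (intro card_Un_Int) auto
  moreover have "(J \<inter> A) \<union> (J \<inter> B) = J" using J(2) by blast
  ultimately have e: "card (J \<inter> A) + card (J \<inter> B) = card J + card ((J \<inter> A) \<inter> (J \<inter> B))" by simp
  moreover have "card I \<le> card ((J \<inter> A) \<inter> (J \<inter> B))" using I(1) J(1) fJ by (intro card_mono) auto
  ultimately show ?thesis using a b I J by linarith
qed

lemma rk_subadd: assumes "matroid E indep"
  shows "mrank indep (A \<union> B) \<le> mrank indep A + mrank indep B"
  using rk_submod[OF assms, of A B] by linarith

lemma cl_mono: assumes "matroid E indep" "A \<subseteq> A'" "mrank indep (insert x A) = mrank indep A"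
  shows "mrank indep (insert x A') = mrank indep A'"
proof -
  have "mrank indep (A' \<union> insert x A) + mrank indep (A' \<inter> insert x A) \<le> mrank indep A' + mrank indep (insert x A)"
    by (rule rk_submod[OF assms(1)])
  moreover have "mrank indep A \<le> mrank indep (A' \<inter> insert x A)" using assms(2) by (intro rk_mono[OF assms(1)]) auto
  moreover have "A' \<union> insert x A = insert x A'" using assms(2) by blast
  ultimately have "mrank indep (insert x A') \<le> mrank indep A'" using assms(3) by simp
  moreover have "mrank indep A' \<le> mrank indep (insert x A')" by (intro rk_mono[OF assms(1)]) auto
  ultimately show ?thesis using assms(3) by linarith
qed

lemma cl_union: assumes "matroid E indep" "finite B" "\<forall>x\<in>B. mrank indep (insert x A) = mrank indep A"
  shows "mrank indep (A \<union> B) = mrank indep A"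
  using assms(2,3)
proof (induction B rule: finite_induct)
  case empty then show ?case by simp
next
  case (insert x B)
  have "mrank indep (insert x (A \<union> B)) = mrank indep (A \<union> B)"
    using cl_mono[OF assms(1), of A "A \<union> B" x] insert by auto
  then show ?case using insert by simp
qed

lemma cl_trans: assumes "matroid E indep" "mrank indep (A \<union> B) = mrank indep A"
  "mrank indep (insert x (A \<union> B)) = mrank indep (A \<union> B)"
  shows "mrank indep (insert x A) = mrank indep A"
proof -
  have "mrank indep (insert x A) \<le> mrank indep (insert x (A \<union> B))" by (intro rk_mono[OF assms(1)]) auto
  moreover have "mrank indep A \<le> mrank indep (insert x A)" by (intro rk_mono[OF assms(1)]) auto
  ultimately show ?thesis using assms by linarith
qed




lemma gm_p1: "graph_matroid_family M \<Longrightarrow> \<forall>G. is_graph G \<longrightarrow> matroid G (M G)"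
  unfolding graph_matroid_family_def by (elim conjE)

lemma gm_p2: "graph_matroid_family M \<Longrightarrow> \<forall>G H f. is_graph G \<and> is_graph H \<and> bij_betw f (verts G) (verts H) \<and>
        H = (\<lambda>e. f ` e) ` G \<longrightarrow>
        (\<forall>F. F \<subseteq> G \<longrightarrow> (M G F \<longleftrightarrow> M H ((\<lambda>e. f ` e) ` F)))"
  unfolding graph_matroid_family_def by (elim conjE)

lemma gm_p3: "graph_matroid_family M \<Longrightarrow> \<forall>G H. is_graph G \<and> H \<subseteq> G \<longrightarrow> (\<forall>F. M H F \<longleftrightarrow> M G F \<and> F \<subseteq> H)"
  unfolding graph_matroid_family_def by (elim conjE)

lemma gm_matroid: "graph_matroid_family M \<Longrightarrow> is_graph G \<Longrightarrow> matroid G (M G)"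
  using gm_p1 by simp

lemma gm_restr: "graph_matroid_family M \<Longrightarrow> is_graph G \<Longrightarrow> H \<subseteq> G \<Longrightarrow> M H F \<longleftrightarrow> M G F \<and> F \<subseteq> H"
  using gm_p3 by simp

lemma gm_iso: "graph_matroid_family M \<Longrightarrow> is_graph G \<Longrightarrow> is_graph H \<Longrightarrow> bij_betw f (verts G) (verts H) \<Longrightarrow>
        H = (\<lambda>e. f ` e) ` G \<Longrightarrow> F \<subseteq> G \<Longrightarrow> M G F \<longleftrightarrow> M H ((\<lambda>e. f ` e) ` F)"
  using gm_p2 by simp

lemma rk_restr: assumes "graph_matroid_family M" "is_graph G" "H \<subseteq> G" "A \<subseteq> H"
  shows "mrank (M H) A = mrank (M G) A"
proof -
  have "{F. F \<subseteq> A \<and> M H F} = {F. F \<subseteq> A \<and> M G F}" using gm_restr[OF assms(1-3)] assms(4) by blast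
  then show ?thesis unfolding mrank_def by simp
qed

lemma is_graph_sub: "is_graph G \<Longrightarrow> H \<subseteq> G \<Longrightarrow> is_graph H"
  unfolding is_graph_def using finite_subset by blast

lemma is_graph_fin: "is_graph G \<Longrightarrow> finite G" unfolding is_graph_def by blast

lemma circuit_ex: assumes gm: "graph_matroid_family M" and G: "is_graph G" and F: "F \<subseteq> G" "\<not> M G F"
  shows "\<exists>C\<subseteq>F. is_circuit M C"
proof -
  obtain C where C: "C \<subseteq> F \<and> \<not> M G C" and min: "\<And>C'. C' \<subseteq> F \<and> \<not> M G C' \<Longrightarrow> card C \<le> card C'"
    using ex_has_least_nat[of "\<lambda>C. C \<subseteq> F \<and> \<not> M G C" F card] F by blast
  have mat: "matroid G (M G)" using gm_matroid[OF gm G] .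
  have CG: "C \<subseteq> G" using C F by blast
  have fC: "finite C" using CG is_graph_fin[OF G] finite_subset by blast
  have gC: "is_graph C" using is_graph_sub[OF G CG] .
  have r1: "grank M C = mrank (M G) C" unfolding grank_def using rk_restr[OF gm G CG] by simp
  have "mrank (M G) C \<le> card C" using rk_le_card[OF mat fC] .
  moreover have "mrank (M G) C \<noteq> card C" using rk_indep[OF mat fC] C by blast
  ultimately have lt: "grank M C < card C" using r1 by simp
  have "grank M (C - {e}) = card C - 1" if e: "e \<in> C" for e
  proof -
    have "card (C - {e}) < card C" using e fC by (meson card_Diff1_less)
    then have "M G (C - {e})" using min[of "C - {e}"] C by fastforce
    then have "mrank (M G) (C - {e}) = card (C - {e})" using indep_rk[OF mat] by blast
    moreover have "grank M (C - {e}) = mrank (M G) (C - {e})" unfolding grank_def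
      using rk_restr[OF gm G, of "C - {e}" "C - {e}"] CG by blast
    ultimately show ?thesis using e fC by simp
  qed
  then have "is_circuit M C" unfolding is_circuit_def using gC lt by blast
  then show ?thesis using C by blast
qed

lemma circ_dep: assumes gm: "graph_matroid_family M" and c: "is_circuit M C" and G: "is_graph G" and CG: "C \<subseteq> G"
  shows "\<not> M G C"
proof
  assume "M G C"
  then have "M C C" using gm_restr[OF gm G CG] by blast
  then have "mrank (M C) C = card C" using indep_rk[OF gm_matroid[OF gm is_graph_sub[OF G CG]]] by blast
  then show False using c unfolding is_circuit_def grank_def by simp
qed

lemma verts_fin: "is_graph G \<Longrightarrow> finite (verts G)"
  unfolding is_graph_def verts_def by (metis card.infinite finite_Union zero_neq_numeral)

lemma degree_pos: "is_graph G \<Longrightarrow> x \<in> verts G \<Longrightarrow> 1 \<le> degree G x"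
proof -
  assume G: "is_graph G" and x: "x \<in> verts G"
  then obtain e where "e \<in> G" "x \<in> e" unfolding verts_def by blast
  moreover have "finite {e\<in>G. x \<in> e}" using is_graph_fin[OF G] by simp
  ultimately show ?thesis unfolding degree_def by (metis (mono_tags, lifting) One_nat_def Suc_leI card_gt_0_iff empty_iff mem_Collect_eq)
qed

lemma min_degree_le: "is_graph G \<Longrightarrow> x \<in> verts G \<Longrightarrow> min_degree G \<le> degree G x"
  unfolding min_degree_def using verts_fin by (intro Min_le) auto

lemma min_degree_in: "is_graph G \<Longrightarrow> verts G \<noteq> {} \<Longrightarrow> \<exists>x\<in>verts G. min_degree G = degree G x"
proof -
  assume "is_graph G" "verts G \<noteq> {}"
  then have "min_degree G \<in> degree G ` verts G" unfolding min_degree_def using verts_fin by (intro Min_in) auto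
  then show ?thesis by auto
qed

lemma circ_deg: assumes c: "is_circuit M C" and x: "x \<in> verts C"
  shows "dimensionality M + 1 \<le> degree C x"
proof -
  have gC: "is_graph C" using c unfolding is_circuit_def by blast
  have "dimensionality M \<le> min_degree C - 1" unfolding dimensionality_def
    using c by (intro Least_le) blast
  moreover have "min_degree C \<le> degree C x" using min_degree_le[OF gC x] .
  moreover have "1 \<le> degree C x" using degree_pos[OF gC x] .
  ultimately show ?thesis by linarith
qed




lemma cg_intro: "i < N \<Longrightarrow> j < N \<Longrightarrow> i \<noteq> j \<Longrightarrow> {i, j} \<in> complete_graph N"
  unfolding complete_graph_def by blast

lemma cg_elim: "x \<in> complete_graph N \<Longrightarrow> \<exists>i j. x = {i, j} \<and> i < N \<and> j < N \<and> i \<noteq> j"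
  unfolding complete_graph_def by blast

lemma cg_graph: "is_graph (complete_graph N)"
proof -
  have "complete_graph N \<subseteq> Pow {..<N}" using cg_elim by blast
  then have "finite (complete_graph N)" by (meson finite_Pow_iff finite_lessThan finite_subset)
  moreover have "\<forall>e\<in>complete_graph N. card e = 2" using cg_elim by fastforce
  ultimately show ?thesis unfolding is_graph_def by blast
qed

lemma cg_mono: "n \<le> N \<Longrightarrow> complete_graph n \<subseteq> complete_graph N"
  unfolding complete_graph_def by fastforce

context
  fixes M :: "nat set set \<Rightarrow> nat set set \<Rightarrow> bool" and C0 :: "nat set set" and u v :: nat
  assumes gm: "graph_matroid_family M" and circ: "is_circuit M C0"
    and ein: "{u, v} \<in> C0" and uv: "u \<noteq> v" and vdeg: "\<forall>e'\<in>C0. v \<in> e' \<longrightarrow> e' = {u, v}"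
begin

abbreviation "X \<equiv> C0 - {{u, v}}"
abbreviation "T \<equiv> insert u (verts X)"

lemma gC0: "is_graph C0" using circ unfolding is_circuit_def by blast

lemma vC0: "verts C0 = insert v T"
proof -
  have "C0 = insert {u,v} X" using ein by blast
  then show ?thesis unfolding verts_def by auto
qed

lemma vT: "v \<notin> T"
  using uv vdeg unfolding verts_def by auto

lemma fT: "finite T" using verts_fin[OF gC0] vC0 by simp

lemma X_indep: "M C0 X"
proof -
  have fC0: "finite C0" using gC0 is_graph_fin by blast
  have gX: "is_graph X" using is_graph_sub[OF gC0] by blast
  have "grank M X = card C0 - 1" using circ ein unfolding is_circuit_def by blast
  then have "mrank (M X) X = card X" unfolding grank_def using ein fC0 by simp
  then have "M X X" using rk_indep[OF gm_matroid[OF gm gX]] fC0 by blast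
  then show ?thesis using gm_restr[OF gm gC0, of X X] by blast
qed

lemma C0_dep: "\<not> M C0 C0" using circ_dep[OF gm circ gC0] by blast

lemma transfer:
  assumes aN: "a < N" and bN: "b < N" and ab: "a \<noteq> b" and YN: "Y \<subseteq> {..<N}" and aY: "a \<notin> Y"
    and bY: "b \<notin> Y" and cY: "card (T - {u}) \<le> card Y" and fY: "finite Y"
  shows "\<exists>P. P \<subseteq> complete_graph N \<and> (\<forall>p\<in>P. p \<subseteq> insert a Y) \<and>
     mrank (M (complete_graph N)) (insert {a,b} P) = mrank (M (complete_graph N)) P"
proof -
  obtain g where g: "g ` (T - {u}) \<subseteq> Y" "inj_on g (T - {u})"
    using card_le_inj[of "T - {u}" Y] fT fY cY by blast
  define \<phi> where "\<phi> x = (if x = u then a else if x = v then b else g x)" for x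
  have \<phi>T: "\<phi> ` T \<subseteq> insert a Y" using g unfolding \<phi>_def using vT by auto
  have inj: "inj_on \<phi> (insert v T)"
  proof (rule inj_onI)
    fix x y assume x: "x \<in> insert v T" and y: "y \<in> insert v T" and e: "\<phi> x = \<phi> y"
    show "x = y"
    proof (cases "x = u \<or> x = v \<or> y = u \<or> y = v")
      case True
      then show ?thesis using e x y g aY bY ab vT uv unfolding \<phi>_def by (auto split: if_splits)
    next
      case False
      then have "g x = g y" "x \<in> T - {u}" "y \<in> T - {u}" using e x y unfolding \<phi>_def by auto
      then show ?thesis using g(2) by (meson inj_onD)
    qed
  qed
  have \<phi>N: "\<phi> ` insert v T \<subseteq> {..<N}" using \<phi>T YN aN bN unfolding \<phi>_def by auto
  define C' where "C' = (\<lambda>e. \<phi> ` e) ` C0"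
  define P where "P = (\<lambda>e. \<phi> ` e) ` X"
  have uvab: "\<phi> ` {u,v} = {a,b}" unfolding \<phi>_def using uv by auto
  have "C0 = insert {u,v} X" using ein by blast
  then have C'P: "C' = insert {a,b} P" unfolding C'_def P_def using uvab by (metis image_insert)
  have vC': "verts C' = \<phi> ` verts C0" unfolding verts_def C'_def by auto
  have injE: "inj_on \<phi> e" if "e \<in> C0" for e
    using inj vC0 that unfolding verts_def by (metis Union_upper inj_on_subset)
  have gC': "is_graph C'"
  proof -
    have "finite C'" unfolding C'_def using is_graph_fin[OF gC0] by simp
    moreover have "\<forall>e\<in>C'. card e = 2"
      using gC0 injE unfolding C'_def is_graph_def by (auto simp: card_image)
    ultimately show ?thesis unfolding is_graph_def by blast
  qed
  have bij: "bij_betw \<phi> (verts C0) (verts C')" using inj vC0 vC' by (simp add: bij_betw_def)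
  have C'N: "C' \<subseteq> complete_graph N"
  proof
    fix e' assume "e' \<in> C'"
    then obtain e where e: "e \<in> C0" "e' = \<phi> ` e" unfolding C'_def by blast
    then obtain x y where xy: "e = {x,y}" "x \<noteq> y" using gC0 unfolding is_graph_def by (meson card_2_iff)
    have xyv: "x \<in> insert v T" "y \<in> insert v T" using e xy vC0 unfolding verts_def by auto
    then have "\<phi> x \<noteq> \<phi> y" using inj xy by (meson inj_onD)
    moreover have "\<phi> x < N" "\<phi> y < N" using xyv \<phi>N by auto
    ultimately show "e' \<in> complete_graph N" using e xy cg_intro by auto
  qed
  let ?H = "complete_graph N"
  have mat: "matroid ?H (M ?H)" using gm_matroid[OF gm cg_graph] .
  have "M C' P" using gm_iso[OF gm gC0 gC' bij C'_def, of X] X_indep unfolding P_def by blast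
  then have MP: "M ?H P" using gm_restr[OF gm cg_graph C'N] by blast
  have "\<not> M C' C'" using gm_iso[OF gm gC0 gC' bij C'_def, of C0] C0_dep unfolding C'_def by blast
  then have MC': "\<not> M ?H C'" using gm_restr[OF gm cg_graph C'N] by blast
  have fP: "finite P" using m_finF[OF mat MP] .
  have abP: "{a,b} \<notin> P" using MP MC' C'P by (metis insert_absorb)
  have r1: "mrank (M ?H) P = card P" using indep_rk[OF mat MP] .
  have "mrank (M ?H) C' \<le> card C'" using rk_le_card[OF mat] fP C'P by simp
  moreover have "mrank (M ?H) C' \<noteq> card C'" using rk_indep[OF mat] fP C'P MC' by auto
  moreover have "card C' = card P + 1" using C'P abP fP by simp
  moreover have "mrank (M ?H) P \<le> mrank (M ?H) C'" using C'P rk_mono[OF mat] by blast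
  ultimately have "mrank (M ?H) C' = mrank (M ?H) P" using r1 by linarith
  then have "mrank (M ?H) (insert {a,b} P) = mrank (M ?H) P" using C'P by simp
  moreover have "P \<subseteq> ?H" using C'N C'P by blast
  moreover have "\<forall>p\<in>P. p \<subseteq> insert a Y"
  proof
    fix p assume "p \<in> P"
    then obtain e where "e \<in> X" "p = \<phi> ` e" unfolding P_def by blast
    then have "e \<subseteq> T" unfolding verts_def by blast
    then show "p \<subseteq> insert a Y" using \<open>p = \<phi> ` e\<close> \<phi>T by blast
  qed
  ultimately show ?thesis by blast
qed

lemma step1:
  assumes sN: "card T \<le> N" and aN: "a < N" and aZ: "a \<notin> {..<card T}" and z: "z \<in> {..<card T}"
  shows "mrank (M (complete_graph N)) (insert {z,a} {p \<in> complete_graph N. p \<subseteq> {..<card T}})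
       = mrank (M (complete_graph N)) {p \<in> complete_graph N. p \<subseteq> {..<card T}}"
proof -
  let ?Z = "{..<card T}"
  have uT: "u \<in> T" by simp
  have c1: "card (T - {u}) = card T - 1" by (rule card_Diff_singleton) simp
  have c2: "card (?Z - {z}) = card T - 1" using z by simp
  obtain P where P: "P \<subseteq> complete_graph N" "\<forall>p\<in>P. p \<subseteq> insert z (?Z - {z})"
    "mrank (M (complete_graph N)) (insert {z,a} P) = mrank (M (complete_graph N)) P"
    using transfer[of z N a "?Z - {z}"] sN aN aZ z c1 c2 by fastforce
  have "P \<subseteq> {p \<in> complete_graph N. p \<subseteq> ?Z}" using P(1,2) z by blast
  then show ?thesis using cl_mono[OF gm_matroid[OF gm cg_graph] _ P(3)] by blast
qed

lemma step2:
  assumes sN: "card T \<le> N" and aN: "a < N" and bN: "b < N" and ab: "a \<noteq> b" and aZ: "a \<notin> {..<card T}"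
  shows "mrank (M (complete_graph N)) (insert {a,b} {p \<in> complete_graph N. p \<subseteq> {..<card T}})
       = mrank (M (complete_graph N)) {p \<in> complete_graph N. p \<subseteq> {..<card T}}"
proof -
  let ?Z = "{..<card T}"
  let ?K = "{p \<in> complete_graph N. p \<subseteq> ?Z}"
  let ?B = "(\<lambda>z. {z,a}) ` ?Z"
  have mat: "matroid (complete_graph N) (M (complete_graph N))" using gm_matroid[OF gm cg_graph] .
  have r1: "mrank (M (complete_graph N)) (?K \<union> ?B) = mrank (M (complete_graph N)) ?K"
    using cl_union[OF mat, of ?B ?K] step1[OF sN aN aZ] by blast
  have c1: "card (T - {u}) = card T - 1" by (rule card_Diff_singleton) simp
  have c2: "card T - 1 \<le> card (?Z - {b})" using diff_card_le_card_Diff[of "{b}" ?Z] by simp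
  obtain P where P: "P \<subseteq> complete_graph N" "\<forall>p\<in>P. p \<subseteq> insert a (?Z - {b})"
    "mrank (M (complete_graph N)) (insert {a,b} P) = mrank (M (complete_graph N)) P"
    using transfer[of a N b "?Z - {b}"] sN aN bN ab aZ c1 c2 by fastforce
  have "P \<subseteq> ?K \<union> ?B"
  proof
    fix p assume p: "p \<in> P"
    then obtain i j where ij: "p = {i,j}" "i < N" "j < N" "i \<noteq> j" using P(1) cg_elim by blast
    have pa: "p \<subseteq> insert a ?Z" using P(2) p by blast
    show "p \<in> ?K \<union> ?B"
    proof (cases "a \<in> p")
      case True
      then have "p = {i,a} \<or> p = {j,a}" using ij by auto
      moreover have "i = a \<or> i \<in> ?Z" "j = a \<or> j \<in> ?Z" using pa ij by auto
      ultimately show ?thesis using ij by (auto simp: insert_commute)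
    next
      case False
      then have "p \<subseteq> ?Z" using pa by blast
      then show ?thesis using p P(1) by blast
    qed
  qed
  then have "mrank (M (complete_graph N)) (insert {a,b} (?K \<union> ?B)) = mrank (M (complete_graph N)) (?K \<union> ?B)"
    using cl_mono[OF mat _ P(3)] by blast
  then show ?thesis using cl_trans[OF mat r1] by blast
qed

lemma bounded: "grank M (complete_graph n) \<le> 2 ^ card T"
proof -
  define N where "N = max n (card T)"
  let ?Z = "{..<card T}"
  let ?H = "complete_graph N"
  let ?K = "{p \<in> ?H. p \<subseteq> ?Z}"
  have sN: "card T \<le> N" unfolding N_def by simp
  have mat: "matroid ?H (M ?H)" using gm_matroid[OF gm cg_graph] .
  have cl: "mrank (M ?H) (insert x ?K) = mrank (M ?H) ?K" if x: "x \<in> ?H" for x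
  proof -
    obtain i j where ij: "x = {i,j}" "i < N" "j < N" "i \<noteq> j" using x cg_elim by blast
    show ?thesis
    proof (cases "i \<in> ?Z \<and> j \<in> ?Z")
      case True
      then have "x \<in> ?K" using x ij by auto
      then show ?thesis by (simp add: insert_absorb)
    next
      case False
      then have "i \<notin> ?Z \<or> j \<notin> ?Z" by blast
      then show ?thesis
      proof
        assume "i \<notin> ?Z" then show ?thesis using step2[OF sN ij(2,3,4)] ij(1) by simp
      next
        assume "j \<notin> ?Z" then show ?thesis using step2[OF sN ij(3,2)] ij(1,4) by (simp add: insert_commute)
      qed
    qed
  qed
  have fH: "finite ?H" using cg_graph is_graph_fin by blast
  have "mrank (M ?H) (?K \<union> ?H) = mrank (M ?H) ?K" using cl_union[OF mat fH] cl by blast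
  moreover have "?K \<union> ?H = ?H" by blast
  ultimately have rH: "mrank (M ?H) ?H = mrank (M ?H) ?K" by simp
  moreover have "grank M (complete_graph n) = mrank (M ?H) (complete_graph n)"
    unfolding grank_def using rk_restr[OF gm cg_graph[of N], of "complete_graph n" "complete_graph n"] cg_mono[of n N]
    unfolding N_def by simp
  moreover have "mrank (M ?H) (complete_graph n) \<le> mrank (M ?H) ?H"
    using rk_mono[OF mat] cg_mono[of n N] unfolding N_def by simp
  moreover have "mrank (M ?H) ?K \<le> card ?K" using rk_le_card[OF mat] fH by simp
  moreover have "card ?K \<le> card (Pow ?Z)" by (intro card_mono) auto
  moreover have "card (Pow ?Z) = 2 ^ card T" by (simp add: card_Pow)
  ultimately show ?thesis by linarith
qed

end

lemma circuit_exists: assumes gm: "graph_matroid_family M" and nt: "nontrivial_family M"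
  shows "\<exists>C. is_circuit M C"
proof -
  obtain G0 where G0: "is_graph G0" "grank M G0 < card G0" using nt unfolding nontrivial_family_def by blast
  have "\<not> M G0 G0" using G0 indep_rk[OF gm_matroid[OF gm G0(1)]] unfolding grank_def by fastforce
  then show ?thesis using circuit_ex[OF gm G0(1) order_refl] by blast
qed

lemma dim_pos: assumes gm: "graph_matroid_family M" and nt: "nontrivial_family M" and ub: "unbounded_family M"
  shows "1 \<le> dimensionality M"
proof (rule ccontr)
  assume "\<not> 1 \<le> dimensionality M"
  then have d0: "dimensionality M = 0" by simp
  obtain C1 where C1: "is_circuit M C1" using circuit_exists[OF gm nt] by blast
  have "\<exists>C. is_circuit M C \<and> dimensionality M = min_degree C - 1"
    unfolding dimensionality_def by (rule LeastI[of _ "min_degree C1 - 1"]) (use C1 in blast)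
  then obtain C0 where C0: "is_circuit M C0" "min_degree C0 \<le> 1" using d0 by auto
  have gC0: "is_graph C0" using C0 unfolding is_circuit_def by blast
  have "card C0 > 0" using C0 unfolding is_circuit_def by linarith
  then obtain e where e: "e \<in> C0" by (metis card.empty ex_in_conv less_irrefl)
  then have "card e = 2" using gC0 unfolding is_graph_def by blast
  then have "e \<noteq> {}" by auto
  then have "verts C0 \<noteq> {}" using e unfolding verts_def by blast
  then obtain v where v: "v \<in> verts C0" "min_degree C0 = degree C0 v" using min_degree_in[OF gC0] by blast
  have "degree C0 v = 1" using v C0(2) degree_pos[OF gC0 v(1)] by linarith
  then obtain e0 where e0: "{e'\<in>C0. v \<in> e'} = {e0}" unfolding degree_def by (meson card_1_singletonE)
  then have e0C: "e0 \<in> C0" "v \<in> e0" by auto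
  then have "card e0 = 2" using gC0 unfolding is_graph_def by blast
  then obtain x y where xy: "e0 = {x,y}" "x \<noteq> y" by (meson card_2_iff)
  obtain u where u: "e0 = {u,v}" "u \<noteq> v" using xy e0C(2) by (metis insert_commute insertE singletonD)
  have vdeg: "\<forall>e'\<in>C0. v \<in> e' \<longrightarrow> e' = {u,v}" using e0 u by blast
  have ein: "{u,v} \<in> C0" using e0C u by simp
  define B :: nat where "B = 2 ^ card (insert u (verts (C0 - {{u,v}})))"
  obtain n where n: "grank M (complete_graph n) \<ge> B + 1" using ub unfolding unbounded_family_def by blast
  have "grank M (complete_graph n) \<le> B" unfolding B_def by (rule bounded[OF gm C0(1) ein u(2) vdeg])
  then show False using n by linarith
qed




theorem lemma3p4:
  fixes M :: "nat set set \<Rightarrow> nat set set \<Rightarrow> bool" and G :: "nat set set" and k :: nat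
  assumes "graph_matroid_family M"
    and "nontrivial_family M"
    and "unbounded_family M"
    and "is_graph G"
    and "k \<ge> 2"
    and "vertically_connected G (M G) k"
  shows "min_degree G \<ge> k + dimensionality M - 1 \<and> card (verts G) \<ge> k + dimensionality M"
proof -
  note gm = assms(1) and G = assms(4) and k2 = assms(5) and vc = assms(6)
  define d where "d = dimensionality M"
  have d1: "1 \<le> d" unfolding d_def using dim_pos[OF gm assms(2,3)] .
  have mat: "matroid G (M G)" using gm_matroid[OF gm G] .
  have fG: "finite G" using is_graph_fin[OF G] .
  have rG: "k \<le> mrank (M G) G" using vc unfolding vertically_connected_def by blast
  have "G \<noteq> {}"
  proof
    assume "G = {}"
    then have "mrank (M G) G = 0" using rk_le_card[OF mat, of "{}"] by simp
    then show False using rG k2 by simp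
  qed
  then obtain e where "e \<in> G" by blast
  then have "card e = 2" using G unfolding is_graph_def by blast
  then have "e \<noteq> {}" by auto
  then have "verts G \<noteq> {}" using \<open>e \<in> G\<close> unfolding verts_def by blast
  then obtain v where v: "v \<in> verts G" "min_degree G = degree G v" using min_degree_in[OF G] by blast
  define E1 where "E1 = {e\<in>G. v \<in> e}"
  define E2 where "E2 = G - E1"
  define \<delta> where "\<delta> = card E1"
  have \<delta>deg: "degree G v = \<delta>" unfolding \<delta>_def E1_def degree_def by simp
  have \<delta>1: "1 \<le> \<delta>" using degree_pos[OF G v(1)] \<delta>deg by simp
  have fE1: "finite E1" using fG unfolding E1_def by simp
  have E1G: "E1 \<subseteq> G" unfolding E1_def by blast
  have E2G: "E2 \<subseteq> G" unfolding E2_def by blast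
  have e12: "E1 \<union> E2 = G" "E1 \<inter> E2 = {}" unfolding E2_def using E1G by auto
  have edge2: "\<And>e. e \<in> G \<Longrightarrow> \<exists>x y. e = {x,y} \<and> x \<noteq> y" using G unfolding is_graph_def by (meson card_2_iff)
  have main: "k + d - 1 \<le> \<delta>"
  proof (rule ccontr)
    assume "\<not> k + d - 1 \<le> \<delta>"
    then have lt: "\<delta> < k + d - 1" by simp
    define m where "m = min \<delta> d"
    obtain I where I: "I \<subseteq> E2" "M G I" "card I = mrank (M G) E2" using rk_ex[OF mat] by blast
    obtain S where S: "S \<subseteq> E1" "card S = m" using obtain_subset_with_card_n[of m E1] \<delta>_def m_def by auto
    have fS: "finite S" using S fE1 finite_subset by blast
    have fI: "finite I" using m_finF[OF mat I(2)] .
    have IS: "M G (I \<union> S)"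
    proof (rule ccontr)
      assume dep: "\<not> M G (I \<union> S)"
      have "I \<union> S \<subseteq> G" using I S E1G E2G by blast
      then obtain C where C: "C \<subseteq> I \<union> S" "is_circuit M C" using circuit_ex[OF gm G _ dep] by blast
      have CG: "C \<subseteq> G" using C \<open>I \<union> S \<subseteq> G\<close> by blast
      show False
      proof (cases "C \<subseteq> I")
        case True
        then have "M G C" using m_down[OF mat I(2)] by blast
        then show False using circ_dep[OF gm C(2) G CG] by blast
      next
        case False
        then obtain f where f: "f \<in> C" "f \<in> S" using C(1) by blast
        then have "v \<in> f" using S E1_def by blast
        then have vC: "v \<in> verts C" using f unfolding verts_def by blast
        have "{e\<in>C. v \<in> e} \<subseteq> S" using C(1) I(1) unfolding E2_def E1_def by blast
        then have "degree C v \<le> card S" unfolding degree_def using fS by (simp add: card_mono)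
        moreover have "d + 1 \<le> degree C v" using circ_deg[OF C(2) vC] unfolding d_def .
        ultimately show False using S(2) m_def by linarith
      qed
    qed
    have "card (I \<union> S) = card I + card S" using I(1) S(1) e12(2) fI fS by (intro card_Un_disjoint) auto
    moreover have "I \<union> S \<subseteq> G" using I S E1G E2G by blast
    then have "card (I \<union> S) \<le> mrank (M G) G" using rk_ge[OF mat _ IS] by blast
    ultimately have rA: "mrank (M G) E2 + m \<le> mrank (M G) G" using I S by linarith
    have rB: "mrank (M G) E1 + 1 \<le> mrank (M G) G"
    proof (cases "\<delta> < k")
      case True
      have "mrank (M G) E1 \<le> \<delta>" using rk_le_card[OF mat fE1] \<delta>_def by simp
      then show ?thesis using True rG by linarith
    next
      case False
      then have d2: "2 \<le> d" using lt by linarith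
      obtain e where e: "e \<in> E1" using \<delta>1 \<delta>_def by (metis card.empty ex_in_conv not_one_le_zero)
      then obtain x y where xy: "e = {x,y}" "x \<noteq> y" using edge2 E1G by blast
      obtain w where w: "e = {v,w}" "w \<noteq> v" using xy e unfolding E1_def by auto
      have wV: "w \<in> verts G" using e w E1G unfolding verts_def by blast
      have "2 \<le> degree G w" using min_degree_le[OF G wV] v(2) \<delta>deg False k2 by linarith
      then have "2 \<le> card {e'\<in>G. w \<in> e'}" unfolding degree_def .
      have "\<not> {e'\<in>G. w \<in> e'} \<subseteq> {e}"
      proof
        assume "{e'\<in>G. w \<in> e'} \<subseteq> {e}"
        then have "card {e'\<in>G. w \<in> e'} \<le> card {e}" by (intro card_mono) auto
        then show False using \<open>2 \<le> card {e'\<in>G. w \<in> e'}\<close> by simp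
      qed
      then obtain f where f: "f \<in> G" "w \<in> f" "f \<noteq> e" by blast
      have fE2: "f \<in> E2"
      proof -
        have "v \<notin> f"
        proof
          assume "v \<in> f"
          obtain p q where "f = {p,q}" "p \<noteq> q" using edge2 f(1) by blast
          then have "f = {v,w}" using \<open>v \<in> f\<close> f(2) w(2) by auto
          then show False using f(3) w(1) by simp
        qed
        then show ?thesis using f(1) unfolding E2_def E1_def by blast
      qed
      have fnE1: "f \<notin> E1" using fE2 e12(2) by blast
      define S2 where "S2 = insert f E1"
      have S2G: "S2 \<subseteq> G" unfolding S2_def using f(1) E1G by blast
      have IS2: "M G S2"
      proof (rule ccontr)
        assume dep: "\<not> M G S2"
        then obtain C where C: "C \<subseteq> S2" "is_circuit M C" using circuit_ex[OF gm G S2G dep] by blast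
        have "card C > 0" using C(2) unfolding is_circuit_def by linarith
        then obtain g where g: "g \<in> C" by (metis card.empty ex_in_conv less_irrefl)
        then obtain p q where pq: "g = {p,q}" "p \<noteq> q" using edge2 C(1) S2G by blast
        obtain y where y: "y \<in> g" "y \<noteq> v" using pq by auto
        have yC: "y \<in> verts C" using g y unfolding verts_def by blast
        have sub: "{e'\<in>C. y \<in> e'} \<subseteq> {{v,y}, f}"
        proof
          fix e' assume e': "e' \<in> {e'\<in>C. y \<in> e'}"
          show "e' \<in> {{v,y}, f}"
          proof (cases "e' = f")
            case False
            then have "e' \<in> E1" using e' C(1) unfolding S2_def by blast
            then have "v \<in> e'" "e' \<in> G" unfolding E1_def by auto
            moreover obtain p' q' where "e' = {p',q'}" "p' \<noteq> q'" using edge2 \<open>e' \<in> G\<close> by blast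
            ultimately have "e' = {v,y}" using e' y(2) by auto
            then show ?thesis by simp
          qed simp
        qed
        have "degree C y \<le> card {{v,y}, f}" unfolding degree_def using sub by (intro card_mono) auto
        also have "\<dots> \<le> 2" by (simp add: card_insert_le_m1)
        finally have "degree C y \<le> 2" .
        moreover have "d + 1 \<le> degree C y" using circ_deg[OF C(2) yC] unfolding d_def .
        ultimately show False using d2 by linarith
      qed
      have "card S2 = \<delta> + 1" unfolding S2_def \<delta>_def using fE1 fnE1 by simp
      moreover have "card S2 \<le> mrank (M G) G" using rk_ge[OF mat S2G IS2] .
      moreover have "mrank (M G) E1 \<le> \<delta>" using rk_le_card[OF mat fE1] \<delta>_def by simp
      ultimately show ?thesis by linarith
    qed
    have rC: "mrank (M G) G \<le> mrank (M G) E1 + mrank (M G) E2" using rk_subadd[OF mat, of E1 E2] e12(1) by simp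
    have r1d: "mrank (M G) E1 \<le> \<delta>" using rk_le_card[OF mat fE1] \<delta>_def by simp
    define r1 where "r1 = mrank (M G) E1"
    define r2 where "r2 = mrank (M G) E2"
    define r where "r = mrank (M G) G"
    define k' where "k' = r1 + r2 + 1 - r"
    have m1: "1 \<le> m" "m \<le> \<delta>" "m \<le> d" "m = \<delta> \<or> m = d" using \<delta>1 d1 unfolding m_def by auto
    have hyps: "r2 + m \<le> r" "r1 + 1 \<le> r" "r \<le> r1 + r2" "r1 \<le> \<delta>"
      using rA rB rC r1d unfolding r1_def r2_def r_def by auto
    have "r1 + r2 + 2 \<le> r + k"
      using m1(4)
    proof
      assume "m = \<delta>" then show ?thesis using hyps k2 by linarith
    next
      assume "m = d" then show ?thesis using hyps lt by linarith
    qed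
    then have k'1: "0 < k'" "k' < k" using hyps unfolding k'_def by arith+
    have "vertical_separation G (M G) k' E1 E2"
      unfolding vertical_separation_def using e12 hyps m1 unfolding k'_def r1_def r2_def r_def by arith
    then show False using vc k'1 unfolding vertically_connected_def by blast
  qed
  have "card E1 \<le> card (verts G - {v})"
  proof -
    define h where "h e = the_elem (e - {v})" for e
    have hE: "e = {v, h e} \<and> h e \<noteq> v \<and> h e \<in> verts G" if e: "e \<in> E1" for e
    proof -
      obtain x y where xy: "e = {x,y}" "x \<noteq> y" using edge2 e E1G by blast
      obtain w where w: "e = {v,w}" "w \<noteq> v" using xy e unfolding E1_def by auto
      have "e - {v} = {w}" using w by auto
      then have "h e = w" unfolding h_def by simp
      then show ?thesis using w e E1G unfolding verts_def by blast
    qed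
    have "inj_on h E1" by (rule inj_onI) (metis hE)
    moreover have "h ` E1 \<subseteq> verts G - {v}" using hE by blast
    moreover have "finite (verts G - {v})" using verts_fin[OF G] by simp
    ultimately show ?thesis by (meson card_inj_on_le)
  qed
  moreover have "card (verts G - {v}) = card (verts G) - 1" using v(1) by (rule card_Diff_singleton)
  moreover have "card (verts G) > 0" using v(1) verts_fin[OF G] card_gt_0_iff by blast
  ultimately have "\<delta> + 1 \<le> card (verts G)" unfolding \<delta>_def by linarith
  then show ?thesis using main v(2) \<delta>deg k2 unfolding d_def by linarith
qed


end
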